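(* Let $F:\mathcal C\to\mathcal D$ be a morphism of cylinder categories. Then $F$ is homotopy fully faithful if and only if the following holds: for every cofibration $i:A\hookrightarrow B$ in $\mathcal C$ such that $F(i)$ admits a retraction $r:F(B)\to F(A)$ in $\mathcal D$, there is a retraction $r':B\to A$ of $i$ in $\mathcal C$ such that $F(r')\sim_{F(A)} r$ (homotopic relative to $F(A)$).
   Context: A cylinder category is a category $\mathcal C$ with two classes of morphisms, the cofibrations and the weak equivalences (morphisms in both classes are called trivial cofibrations), such that: (1) both classes contain all isomorphisms and are closed under composition; (2) weak equivalences satisfy 2-out-of-6: if $f,g,h$ are composable and $f\circ g$, $g\circ h$ are weak equivalences then $f,g,h,f\circ g\circ h$ are; (3) $\mathcal C$ has an initial object $0$ and every $0\to X$ is a cofibration; (4) pushouts of cofibrations along arbitrary maps exist and are cofibrations; (5) pushouts of trivial cofibrations are trivial cofibrations; (6) for every object $X$ the codiagonal $X\sqcup X\to X$ factors as a cofibration $X\sqcup X\hookrightarrow IX$ followed by a weak equivalence $IX\to X$; (7) every trivial cofibration admits a retraction. A morphism of cylinder categories is a functor preserving cofibrations, weak equivalences, the initial object and pushouts along cofibrations. For a cofibration $A\hookrightarrow B$, a relative cylinder object is a factorization $B\sqcup_A B\hookrightarrow I_AB\xrightarrow{\sim}B$ of the codiagonal into a cofibration followed by a weak equivalence. Two maps $f,g:B\to X$ with $f|_A=g|_A$ are homotopic relative to $A$, written $f\sim_A g$, if $(f,g):B\sqcup_AB\to X$ extends to $I_AB\to X$ for some relative cylinder object. $F$ is homotopy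 fully faithful if for every cofibration $i:A\hookrightarrow B$ in $\mathcal C$, every arrow $x:A\to X$ in $\mathcal C$, and every $v:F(B)\to F(X)$ in $\mathcal D$ with $v\circ F(i)=F(x)$, there is $v':B\to X$ in $\mathcal C$ with $v'\circ i=x$ and $F(v')\sim_{F(A)} v$. *)

theory Defs
  imports Main
begin

section \<open>Categories (explicit carriers, arrows composed as cmp g f = g o f)\<close>

record ('o, 'a) cat =
  ob :: "'o set"
  ar :: "'a set"
  src :: "'a \<Rightarrow> 'o"
  tgt :: "'a \<Rightarrow> 'o"
  ident :: "'o \<Rightarrow> 'a"
  cmp :: "'a \<Rightarrow> 'a \<Rightarrow> 'a"

definition hom :: "('o, 'a, 'm) cat_scheme \<Rightarrow> 'o \<Rightarrow> 'o \<Rightarrow> 'a set" where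
  "hom C X Y = {f \<in> ar C. src C f = X \<and> tgt C f = Y}"

definition category :: "('o, 'a, 'm) cat_scheme \<Rightarrow> bool" where
  "category C \<longleftrightarrow>
     (\<forall>f\<in>ar C. src C f \<in> ob C \<and> tgt C f \<in> ob C) \<and>
     (\<forall>X\<in>ob C. ident C X \<in> hom C X X) \<and>
     (\<forall>f\<in>ar C. \<forall>g\<in>ar C. tgt C f = src C g \<longrightarrow> cmp C g f \<in> hom C (src C f) (tgt C g)) \<and>
     (\<forall>f\<in>ar C. cmp C (ident C (tgt C f)) f = f \<and> cmp C f (ident C (src C f)) = f) \<and>
     (\<forall>f\<in>ar C. \<forall>g\<in>ar C. \<forall>h\<in>ar C. tgt C f = src C g \<and> tgt C g = src C h \<longrightarrow>
        cmp C h (cmp C g f) = cmp C (cmp C h g) f)"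

definition iso :: "('o, 'a, 'm) cat_scheme \<Rightarrow> 'a \<Rightarrow> bool" where
  "iso C f \<longleftrightarrow> f \<in> ar C \<and> (\<exists>g\<in>hom C (tgt C f) (src C f).
      cmp C g f = ident C (src C f) \<and> cmp C f g = ident C (tgt C f))"

definition initial :: "('o, 'a, 'm) cat_scheme \<Rightarrow> 'o \<Rightarrow> bool" where
  "initial C z \<longleftrightarrow> z \<in> ob C \<and> (\<forall>X\<in>ob C. \<exists>!f. f \<in> hom C z X)"

definition is_pushout :: "('o, 'a, 'm) cat_scheme \<Rightarrow> 'a \<Rightarrow> 'a \<Rightarrow> 'a \<Rightarrow> 'a \<Rightarrow> bool" where
  "is_pushout C f g p q \<longleftrightarrow>
     f \<in> ar C \<and> g \<in> ar C \<and> p \<in> ar C \<and> q \<in> ar C \<and>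
     src C f = src C g \<and> src C p = tgt C f \<and> src C q = tgt C g \<and> tgt C p = tgt C q \<and>
     cmp C p f = cmp C q g \<and>
     (\<forall>Y u v. u \<in> hom C (tgt C f) Y \<and> v \<in> hom C (tgt C g) Y \<and> cmp C u f = cmp C v g \<longrightarrow>
        (\<exists>!h. h \<in> hom C (tgt C p) Y \<and> cmp C h p = u \<and> cmp C h q = v))"

record ('o, 'a) cyl = "('o, 'a) cat" +
  cof :: "'a set"
  we :: "'a set"

definition cylinder_category :: "('o, 'a, 'm) cyl_scheme \<Rightarrow> bool" where
  "cylinder_category C \<longleftrightarrow>
     category C \<and>
     cof C \<subseteq> ar C \<and> we C \<subseteq> ar C \<and>
     \<comment> \<open>(1)\<close>
     (\<forall>f. iso C f \<longrightarrow> f \<in> cof C \<and> f \<in> we C) \<and>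
     (\<forall>f\<in>cof C. \<forall>g\<in>cof C. tgt C f = src C g \<longrightarrow> cmp C g f \<in> cof C) \<and>
     (\<forall>f\<in>we C. \<forall>g\<in>we C. tgt C f = src C g \<longrightarrow> cmp C g f \<in> we C) \<and>
     \<comment> \<open>(2) 2-out-of-6\<close>
     (\<forall>f\<in>ar C. \<forall>g\<in>ar C. \<forall>h\<in>ar C. tgt C h = src C g \<and> tgt C g = src C f \<and>
        cmp C f g \<in> we C \<and> cmp C g h \<in> we C \<longrightarrow>
        f \<in> we C \<and> g \<in> we C \<and> h \<in> we C \<and> cmp C f (cmp C g h) \<in> we C) \<and>
     \<comment> \<open>(3)\<close>
     (\<exists>z. initial C z) \<and>
     (\<forall>z X f. initial C z \<and> X \<in> ob C \<and> f \<in> hom C z X \<longrightarrow> f \<in> cof C) \<and>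
     \<comment> \<open>(4)\<close>
     (\<forall>i\<in>cof C. \<forall>f\<in>ar C. src C f = src C i \<longrightarrow> (\<exists>p q. is_pushout C i f p q)) \<and>
     (\<forall>i f p q. i \<in> cof C \<and> is_pushout C i f p q \<longrightarrow> q \<in> cof C) \<and>
     \<comment> \<open>(5)\<close>
     (\<forall>i f p q. i \<in> cof C \<and> i \<in> we C \<and> is_pushout C i f p q \<longrightarrow> q \<in> cof C \<and> q \<in> we C) \<and>
     \<comment> \<open>(6) cylinder objects: for every coproduct X + X (pushout over the initial object)
         the codiagonal factors as a cofibration followed by a weak equivalence\<close>
     (\<forall>z X e j1 j2. initial C z \<and> X \<in> ob C \<and> e \<in> hom C z X \<and> is_pushout C e e j1 j2 \<longrightarrow>
        (\<exists>I k s. k \<in> hom C (tgt C j1) I \<and> k \<in> cof C \<and> s \<in> hom C I X \<and> s \<in> we C \<and>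
           cmp C s (cmp C k j1) = ident C X \<and> cmp C s (cmp C k j2) = ident C X)) \<and>
     \<comment> \<open>(7)\<close>
     (\<forall>i. i \<in> cof C \<and> i \<in> we C \<longrightarrow>
        (\<exists>r\<in>hom C (tgt C i) (src C i). cmp C r i = ident C (src C i)))"

text \<open>Homotopy relative to A (for a cofibration i : A -> B) between f g : B -> X with
  f o i = g o i: there is a relative cylinder object  B +_A B -> I_A B -> B  (a pushout
  j1, j2 of i along i, a cofibration k and a weak equivalence s composing to the codiagonal)
  and an extension H : I_A B -> X of (f,g).\<close>
definition htpy_rel :: "('o, 'a, 'm) cyl_scheme \<Rightarrow> 'a \<Rightarrow> 'a \<Rightarrow> 'a \<Rightarrow> bool" where
  "htpy_rel C i f g \<longleftrightarrow>
     i \<in> cof C \<and> f \<in> ar C \<and> g \<in> ar C \<and>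
     src C f = tgt C i \<and> src C g = tgt C i \<and> tgt C f = tgt C g \<and>
     cmp C f i = cmp C g i \<and>
     (\<exists>j1 j2 I k s H. is_pushout C i i j1 j2 \<and>
        k \<in> hom C (tgt C j1) I \<and> k \<in> cof C \<and>
        s \<in> hom C I (tgt C i) \<and> s \<in> we C \<and>
        cmp C s (cmp C k j1) = ident C (tgt C i) \<and> cmp C s (cmp C k j2) = ident C (tgt C i) \<and>
        H \<in> hom C I (tgt C f) \<and> cmp C H (cmp C k j1) = f \<and> cmp C H (cmp C k j2) = g)"

definition cyl_morphism ::
  "('o, 'a, 'm) cyl_scheme \<Rightarrow> ('p, 'b, 'n) cyl_scheme \<Rightarrow> ('o \<Rightarrow> 'p) \<Rightarrow> ('a \<Rightarrow> 'b) \<Rightarrow> bool" where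
  "cyl_morphism C D Fo Fa \<longleftrightarrow>
     cylinder_category C \<and> cylinder_category D \<and>
     (\<forall>X\<in>ob C. Fo X \<in> ob D) \<and>
     (\<forall>f\<in>ar C. Fa f \<in> hom D (Fo (src C f)) (Fo (tgt C f))) \<and>
     (\<forall>X\<in>ob C. Fa (ident C X) = ident D (Fo X)) \<and>
     (\<forall>f\<in>ar C. \<forall>g\<in>ar C. tgt C f = src C g \<longrightarrow> Fa (cmp C g f) = cmp D (Fa g) (Fa f)) \<and>
     (\<forall>f\<in>cof C. Fa f \<in> cof D) \<and>
     (\<forall>f\<in>we C. Fa f \<in> we D) \<and>
     (\<forall>z. initial C z \<longrightarrow> initial D (Fo z)) \<and>
     (\<forall>i f p q. i \<in> cof C \<and> is_pushout C i f p q \<longrightarrow> is_pushout D (Fa i) (Fa f) (Fa p) (Fa q))"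

definition homotopy_fully_faithful ::
  "('o, 'a, 'm) cyl_scheme \<Rightarrow> ('p, 'b, 'n) cyl_scheme \<Rightarrow> ('o \<Rightarrow> 'p) \<Rightarrow> ('a \<Rightarrow> 'b) \<Rightarrow> bool" where
  "homotopy_fully_faithful C D Fo Fa \<longleftrightarrow>
     (\<forall>i A B x X v. i \<in> hom C A B \<and> i \<in> cof C \<and> x \<in> hom C A X \<and>
        v \<in> hom D (Fo B) (Fo X) \<and> cmp D v (Fa i) = Fa x \<longrightarrow>
        (\<exists>v'. v' \<in> hom C B X \<and> cmp C v' i = x \<and> htpy_rel D (Fa i) (Fa v') v))"

end

theory Submission
  imports Defs
begin


lemma homI: "f \<in> ar C \<Longrightarrow> src C f = X \<Longrightarrow> tgt C f = Y \<Longrightarrow> f \<in> hom C X Y"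
  by (simp add: hom_def)
lemma homD: "f \<in> hom C X Y \<Longrightarrow> f \<in> ar C \<and> src C f = X \<and> tgt C f = Y"
  by (simp add: hom_def)

context fixes C :: "('o,'a,'m) cat_scheme" assumes cat: "category C"
begin

lemma c_ob: "f \<in> ar C \<Longrightarrow> src C f \<in> ob C \<and> tgt C f \<in> ob C"
  using cat unfolding category_def by blast
lemma c_id: "X \<in> ob C \<Longrightarrow> ident C X \<in> hom C X X"
  using cat unfolding category_def by blast
lemma c_cmp: "f \<in> hom C X Y \<Longrightarrow> g \<in> hom C Y Z \<Longrightarrow> cmp C g f \<in> hom C X Z"
  using cat unfolding category_def hom_def by auto
lemma c_idl: "f \<in> hom C X Y \<Longrightarrow> cmp C (ident C Y) f = f"
  using cat unfolding category_def hom_def by auto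
lemma c_idr: "f \<in> hom C X Y \<Longrightarrow> cmp C f (ident C X) = f"
  using cat unfolding category_def hom_def by auto
lemma c_assoc: "f \<in> hom C X Y \<Longrightarrow> g \<in> hom C Y Z \<Longrightarrow> h \<in> hom C Z W \<Longrightarrow>
   cmp C h (cmp C g f) = cmp C (cmp C h g) f"
  using cat unfolding category_def hom_def by auto
lemma c_homob: "f \<in> hom C X Y \<Longrightarrow> X \<in> ob C \<and> Y \<in> ob C"
  using c_ob unfolding hom_def by auto

lemma c_assoc_eq: "f \<in> hom C X Y \<Longrightarrow> g \<in> hom C Y Z \<Longrightarrow> h \<in> hom C Z W \<Longrightarrow>
   cmp C h g = e \<Longrightarrow> cmp C h (cmp C g f) = cmp C e f"
  using c_assoc by blast

lemma po_homs: "is_pushout C f g p q \<Longrightarrow> f \<in> hom C (src C f) (tgt C f) \<and> g \<in> hom C (src C f) (tgt C g)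
   \<and> p \<in> hom C (tgt C f) (tgt C p) \<and> q \<in> hom C (tgt C g) (tgt C p)"
  unfolding is_pushout_def hom_def by auto

lemma po_comm: "is_pushout C f g p q \<Longrightarrow> cmp C p f = cmp C q g"
  unfolding is_pushout_def by auto

lemma po_sym: "is_pushout C f g p q \<Longrightarrow> is_pushout C g f q p"
  unfolding is_pushout_def by (auto; metis)

lemma po_univ: "is_pushout C f g p q \<Longrightarrow> u \<in> hom C (tgt C f) Y \<Longrightarrow> v \<in> hom C (tgt C g) Y \<Longrightarrow>
   cmp C u f = cmp C v g \<Longrightarrow> \<exists>h. h \<in> hom C (tgt C p) Y \<and> cmp C h p = u \<and> cmp C h q = v"
  unfolding is_pushout_def by blast

lemma po_uniq: assumes P: "is_pushout C f g p q" and h1: "h1 \<in> hom C (tgt C p) Y"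
  and h2: "h2 \<in> hom C (tgt C p) Y" and e1: "cmp C h1 p = cmp C h2 p" and e2: "cmp C h1 q = cmp C h2 q"
  shows "h1 = h2"
proof -
  from po_homs[OF P] have H: "f \<in> hom C (src C f) (tgt C f)" "g \<in> hom C (src C f) (tgt C g)"
    "p \<in> hom C (tgt C f) (tgt C p)" "q \<in> hom C (tgt C g) (tgt C p)" by auto
  have u: "cmp C h1 p \<in> hom C (tgt C f) Y" using c_cmp H(3) h1 by blast
  have v: "cmp C h1 q \<in> hom C (tgt C g) Y" using c_cmp H(4) h1 by blast
  have "cmp C (cmp C h1 p) f = cmp C h1 (cmp C p f)" using c_assoc H h1 by metis
  also have "\<dots> = cmp C h1 (cmp C q g)" using po_comm[OF P] by simp
  also have "\<dots> = cmp C (cmp C h1 q) g" using c_assoc H h1 by metis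
  finally have c: "cmp C (cmp C h1 p) f = cmp C (cmp C h1 q) g" .
  from P u v c have "\<exists>!h. h \<in> hom C (tgt C p) Y \<and> cmp C h p = cmp C h1 p \<and> cmp C h q = cmp C h1 q"
    unfolding is_pushout_def by blast
  then show ?thesis using h1 h2 e1 e2 by metis
qed

lemma po_intro:
  assumes "f \<in> ar C" "g \<in> ar C" "p \<in> ar C" "q \<in> ar C"
    "src C f = src C g" "src C p = tgt C f" "src C q = tgt C g" "tgt C p = tgt C q"
    "cmp C p f = cmp C q g"
    and ex: "\<And>Y u v. u \<in> hom C (tgt C f) Y \<Longrightarrow> v \<in> hom C (tgt C g) Y \<Longrightarrow> cmp C u f = cmp C v g \<Longrightarrow>
        \<exists>h. h \<in> hom C (tgt C p) Y \<and> cmp C h p = u \<and> cmp C h q = v"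
    and un: "\<And>Y h1 h2. h1 \<in> hom C (tgt C p) Y \<Longrightarrow> h2 \<in> hom C (tgt C p) Y \<Longrightarrow>
        cmp C h1 p = cmp C h2 p \<Longrightarrow> cmp C h1 q = cmp C h2 q \<Longrightarrow> h1 = h2"
  shows "is_pushout C f g p q"
  unfolding is_pushout_def using assms by metis

lemma po_paste:
  assumes P1: "is_pushout C f g p q" and P2: "is_pushout C q h p2 q2"
  shows "is_pushout C f (cmp C h g) (cmp C p2 p) q2"
proof -
  from po_homs[OF P1] have H: "f \<in> hom C (src C f) (tgt C f)" "g \<in> hom C (src C f) (tgt C g)"
    "p \<in> hom C (tgt C f) (tgt C p)" "q \<in> hom C (tgt C g) (tgt C p)" by auto
  from po_homs[OF P2] have H2: "h \<in> hom C (tgt C g) (tgt C h)"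
    "p2 \<in> hom C (tgt C p) (tgt C p2)" "q2 \<in> hom C (tgt C h) (tgt C p2)"
    using H(4) unfolding hom_def by auto
  have hg: "cmp C h g \<in> hom C (src C f) (tgt C h)" using c_cmp H H2 by blast
  have pp: "cmp C p2 p \<in> hom C (tgt C f) (tgt C p2)" using c_cmp H H2 by blast
  have comm: "cmp C (cmp C p2 p) f = cmp C q2 (cmp C h g)"
  proof -
    have "cmp C (cmp C p2 p) f = cmp C p2 (cmp C p f)" using c_assoc H H2 by metis
    also have "\<dots> = cmp C p2 (cmp C q g)" using po_comm[OF P1] by simp
    also have "\<dots> = cmp C (cmp C p2 q) g" using c_assoc H H2 by metis
    also have "\<dots> = cmp C (cmp C q2 h) g" using po_comm[OF P2] by simp
    also have "\<dots> = cmp C q2 (cmp C h g)" using c_assoc H H2 by metis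
    finally show ?thesis .
  qed
  show ?thesis
  proof (rule po_intro)
    show "f \<in> ar C" "cmp C h g \<in> ar C" "cmp C p2 p \<in> ar C" "q2 \<in> ar C"
      using H hg pp H2 by (auto simp: hom_def)
    show "src C f = src C (cmp C h g)" "src C (cmp C p2 p) = tgt C f" "src C q2 = tgt C (cmp C h g)"
      "tgt C (cmp C p2 p) = tgt C q2" using hg pp H2 by (auto simp: hom_def)
    show "cmp C (cmp C p2 p) f = cmp C q2 (cmp C h g)" by (fact comm)
  next
    fix Y u v assume u: "u \<in> hom C (tgt C f) Y" and v: "v \<in> hom C (tgt C (cmp C h g)) Y"
      and e: "cmp C u f = cmp C v (cmp C h g)"
    have v': "v \<in> hom C (tgt C h) Y" using v hg by (simp add: hom_def)
    have vh: "cmp C v h \<in> hom C (tgt C g) Y" using c_cmp H2 v' by blast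
    have e1: "cmp C u f = cmp C (cmp C v h) g" using e c_assoc H H2 v' by metis
    obtain w where w: "w \<in> hom C (tgt C p) Y" "cmp C w p = u" "cmp C w q = cmp C v h"
      using po_univ[OF P1 u vh e1] by blast
    obtain t where t: "t \<in> hom C (tgt C p2) Y" "cmp C t p2 = w" "cmp C t q2 = v"
      using po_univ[OF P2 _ v' w(3)] w(1) H(4) by (metis homD)
    have "cmp C t (cmp C p2 p) = u" using c_assoc H H2 t w by metis
    then show "\<exists>ha. ha \<in> hom C (tgt C (cmp C p2 p)) Y \<and> cmp C ha (cmp C p2 p) = u \<and> cmp C ha q2 = v"
      using t pp by (auto simp: hom_def)
  next
    fix Y h1 h2 assume a1: "h1 \<in> hom C (tgt C (cmp C p2 p)) Y" and a2: "h2 \<in> hom C (tgt C (cmp C p2 p)) Y"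
      and e1: "cmp C h1 (cmp C p2 p) = cmp C h2 (cmp C p2 p)" and e2: "cmp C h1 q2 = cmp C h2 q2"
    have a1': "h1 \<in> hom C (tgt C p2) Y" and a2': "h2 \<in> hom C (tgt C p2) Y" using a1 a2 pp by (auto simp: hom_def)
    have b1: "cmp C h1 p2 \<in> hom C (tgt C p) Y" "cmp C h2 p2 \<in> hom C (tgt C p) Y" using c_cmp H2 a1' a2' by blast+
    have "cmp C (cmp C h1 p2) p = cmp C (cmp C h2 p2) p" using e1 c_assoc H H2 a1' a2' by metis
    moreover have "cmp C (cmp C h1 p2) q = cmp C (cmp C h2 p2) q"
    proof -
      have "cmp C (cmp C h1 p2) q = cmp C h1 (cmp C q2 h)" using c_assoc H H2 a1' po_comm[OF P2] by metis
      also have "\<dots> = cmp C (cmp C h2 q2) h" using c_assoc H H2 a1' e2 by metis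
      also have "\<dots> = cmp C (cmp C h2 p2) q" using c_assoc H H2 a2' po_comm[OF P2] by metis
      finally show ?thesis .
    qed
    ultimately have "cmp C h1 p2 = cmp C h2 p2" using po_uniq[OF P1 b1] by blast
    then show "h1 = h2" using po_uniq[OF P2 a1' a2' _ e2] by blast
  qed
qed

end



locale cylc = fixes C :: "('o,'a,'m) cyl_scheme" assumes cc: "cylinder_category C"
begin

lemma cat: "category C" using cc unfolding cylinder_category_def by (elim conjE) blast
lemma cof_ar0: "cof C \<subseteq> ar C" using cc unfolding cylinder_category_def by (elim conjE) assumption
lemma cof_ar: "f \<in> cof C \<Longrightarrow> f \<in> ar C" using cof_ar0 by blast
lemma we_ar0: "we C \<subseteq> ar C" using cc unfolding cylinder_category_def by (elim conjE) assumption
lemma we_ar: "f \<in> we C \<Longrightarrow> f \<in> ar C" using we_ar0 by blast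
lemma iso_cw: "iso C f \<Longrightarrow> f \<in> cof C \<and> f \<in> we C" using cc unfolding cylinder_category_def by (elim conjE) blast
lemma cof_comp: "f \<in> cof C \<Longrightarrow> g \<in> cof C \<Longrightarrow> tgt C f = src C g \<Longrightarrow> cmp C g f \<in> cof C"
  using cc unfolding cylinder_category_def by (elim conjE) blast
lemma we_comp: "f \<in> we C \<Longrightarrow> g \<in> we C \<Longrightarrow> tgt C f = src C g \<Longrightarrow> cmp C g f \<in> we C"
  using cc unfolding cylinder_category_def by (elim conjE) blast
lemma two6: "f \<in> ar C \<Longrightarrow> g \<in> ar C \<Longrightarrow> h \<in> ar C \<Longrightarrow> tgt C h = src C g \<Longrightarrow> tgt C g = src C f \<Longrightarrow>
   cmp C f g \<in> we C \<Longrightarrow> cmp C g h \<in> we C \<Longrightarrow> f \<in> we C \<and> g \<in> we C \<and> h \<in> we C"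
  using cc unfolding cylinder_category_def by (elim conjE) blast
lemma ex_init: "\<exists>z. initial C z" using cc unfolding cylinder_category_def by (elim conjE) blast
lemma init_cof: "initial C z \<Longrightarrow> f \<in> hom C z X \<Longrightarrow> f \<in> cof C"
proof -
  assume a: "initial C z" "f \<in> hom C z X"
  then have "X \<in> ob C" using c_homob[OF cat] by blast
  then show ?thesis using a cc unfolding cylinder_category_def by (elim conjE) blast
qed
lemma po_ex: "i \<in> cof C \<Longrightarrow> f \<in> ar C \<Longrightarrow> src C f = src C i \<Longrightarrow> \<exists>p q. is_pushout C i f p q"
  using cc unfolding cylinder_category_def by (elim conjE) blast
lemma po_cof: "i \<in> cof C \<Longrightarrow> is_pushout C i f p q \<Longrightarrow> q \<in> cof C"
  using cc unfolding cylinder_category_def by (elim conjE) blast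
lemma po_tcof0: "\<forall>i f p q. i \<in> cof C \<and> i \<in> we C \<and> is_pushout C i f p q \<longrightarrow> q \<in> cof C \<and> q \<in> we C"
  using cc unfolding cylinder_category_def by (elim conjE) assumption
lemma po_tcof: "i \<in> cof C \<Longrightarrow> i \<in> we C \<Longrightarrow> is_pushout C i f p q \<Longrightarrow> q \<in> cof C \<and> q \<in> we C"
  using po_tcof0 by blast
lemma cyl_ax: "initial C z \<Longrightarrow> X \<in> ob C \<Longrightarrow> e \<in> hom C z X \<Longrightarrow> is_pushout C e e j1 j2 \<Longrightarrow>
        (\<exists>I k s. k \<in> hom C (tgt C j1) I \<and> k \<in> cof C \<and> s \<in> hom C I X \<and> s \<in> we C \<and>
           cmp C s (cmp C k j1) = ident C X \<and> cmp C s (cmp C k j2) = ident C X)"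
proof -
  assume a: "initial C z" "X \<in> ob C" "e \<in> hom C z X" "is_pushout C e e j1 j2"
  have "\<forall>z X e j1 j2. initial C z \<and> X \<in> ob C \<and> e \<in> hom C z X \<and> is_pushout C e e j1 j2 \<longrightarrow>
        (\<exists>I k s. k \<in> hom C (tgt C j1) I \<and> k \<in> cof C \<and> s \<in> hom C I X \<and> s \<in> we C \<and>
           cmp C s (cmp C k j1) = ident C X \<and> cmp C s (cmp C k j2) = ident C X)"
    using cc unfolding cylinder_category_def by (elim conjE) assumption
  then show ?thesis using a by blast
qed
lemma retr_ax: "i \<in> cof C \<Longrightarrow> i \<in> we C \<Longrightarrow>
        (\<exists>r\<in>hom C (tgt C i) (src C i). cmp C r i = ident C (src C i))"
proof -
  assume a: "i \<in> cof C" "i \<in> we C"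
  have "\<forall>i. i \<in> cof C \<and> i \<in> we C \<longrightarrow>
        (\<exists>r\<in>hom C (tgt C i) (src C i). cmp C r i = ident C (src C i))"
    using cc unfolding cylinder_category_def by (elim conjE) assumption
  then show ?thesis using a by blast
qed

lemma id_we: "X \<in> ob C \<Longrightarrow> ident C X \<in> we C"
proof -
  assume X: "X \<in> ob C"
  have h: "ident C X \<in> hom C X X" using c_id[OF cat X] .
  have "cmp C (ident C X) (ident C X) = ident C X" using c_idl[OF cat h] .
  then have "iso C (ident C X)" unfolding iso_def using h by (auto simp: hom_def)
  then show ?thesis using iso_cw by blast
qed

lemma we_left: "f \<in> hom C X Y \<Longrightarrow> g \<in> hom C Y Z \<Longrightarrow> g \<in> we C \<Longrightarrow> cmp C g f \<in> we C \<Longrightarrow> f \<in> we C"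
proof -
  assume f: "f \<in> hom C X Y" and g: "g \<in> hom C Y Z" and gw: "g \<in> we C" and gf: "cmp C g f \<in> we C"
  have Z: "Z \<in> ob C" using c_homob[OF cat g] by blast
  have i: "ident C Z \<in> hom C Z Z" using c_id[OF cat Z] .
  have "cmp C (ident C Z) g = g" using c_idl[OF cat g] .
  then show ?thesis using two6[of "ident C Z" g f] f g i gw gf by (auto simp: hom_def)
qed

lemma we_right: "f \<in> hom C X Y \<Longrightarrow> g \<in> hom C Y Z \<Longrightarrow> f \<in> we C \<Longrightarrow> cmp C g f \<in> we C \<Longrightarrow> g \<in> we C"
proof -
  assume f: "f \<in> hom C X Y" and g: "g \<in> hom C Y Z" and fw: "f \<in> we C" and gf: "cmp C g f \<in> we C"
  have X: "X \<in> ob C" using c_homob[OF cat f] by blast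
  have i: "ident C X \<in> hom C X X" using c_id[OF cat X] .
  have "cmp C f (ident C X) = f" using c_idr[OF cat f] .
  then show ?thesis using two6[of g f "ident C X"] f g i fw gf by (auto simp: hom_def)
qed

lemma extend: assumes c: "c \<in> hom C U W" "c \<in> cof C" "c \<in> we C" and H: "H \<in> hom C U Y"
  shows "\<exists>H'. H' \<in> hom C W Y \<and> cmp C H' c = H"
proof -
  have "H \<in> ar C" "src C H = src C c" using H c(1) by (auto simp: hom_def)
  then obtain mu nu where P: "is_pushout C c H mu nu" using po_ex[OF c(2)] by blast
  have nu: "nu \<in> cof C" "nu \<in> we C" using po_tcof[OF c(2,3) P] by auto
  obtain z where z: "z \<in> hom C (tgt C nu) (src C nu)" "cmp C z nu = ident C (src C nu)"
    using retr_ax[OF nu] by blast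
  from po_homs[OF cat P] have hs: "mu \<in> hom C W (tgt C mu)" "nu \<in> hom C Y (tgt C mu)"
    using c H by (auto simp: hom_def)
  have z': "z \<in> hom C (tgt C mu) Y" using z hs by (auto simp: hom_def)
  have "cmp C (cmp C z mu) c = cmp C z (cmp C nu H)"
    using c_assoc[OF cat] c hs z' po_comm[OF cat P] by metis
  also have "\<dots> = cmp C (cmp C z nu) H" using c_assoc[OF cat] H hs z' by metis
  also have "\<dots> = H" using z hs H c_idl[OF cat H] by (auto simp: hom_def)
  finally show ?thesis using c_cmp[OF cat hs(1) z'] by blast
qed

end



context cylc begin

lemma factor: assumes f: "f \<in> hom C U V"
  shows "\<exists>M c r. c \<in> hom C U M \<and> c \<in> cof C \<and> r \<in> hom C M V \<and> r \<in> we C \<and> cmp C r c = f"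
proof -
  note ct = cat
  obtain z where z: "initial C z" using ex_init by blast
  have Uo: "U \<in> ob C" "V \<in> ob C" using c_homob[OF cat f] by auto
  obtain eU where eU: "eU \<in> hom C z U" using z Uo unfolding initial_def by blast
  have eUc: "eU \<in> cof C" using init_cof[OF z eU] .
  have "eU \<in> ar C" using eU by (simp add: hom_def)
  then obtain j1 j2 where P0: "is_pushout C eU eU j1 j2" using po_ex[OF eUc] by blast
  define S where "S = tgt C j1"
  have j: "j1 \<in> hom C U S" "j2 \<in> hom C U S" using po_homs[OF ct P0] eU unfolding S_def by (auto simp: hom_def)
  have j2c: "j2 \<in> cof C" using po_cof[OF eUc P0] .
  have j1c: "j1 \<in> cof C" using po_cof[OF eUc po_sym[OF ct P0]] .
  obtain I k s where cy: "k \<in> hom C S I" "k \<in> cof C" "s \<in> hom C I U" "s \<in> we C"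
     "cmp C s (cmp C k j1) = ident C U" "cmp C s (cmp C k j2) = ident C U"
    using cyl_ax[OF z Uo(1) eU P0] unfolding S_def by blast
  have "f \<in> ar C" "src C f = src C j1" using f j by (auto simp: hom_def)
  then obtain t1 t2 where P1: "is_pushout C j1 f t1 t2" using po_ex[OF j1c] by blast
  define T where "T = tgt C t1"
  have t: "t1 \<in> hom C S T" "t2 \<in> hom C V T" using po_homs[OF ct P1] j f unfolding T_def by (auto simp: hom_def)
  have "t1 \<in> ar C" "src C t1 = src C k" using t cy by (auto simp: hom_def)
  then obtain al be where P2: "is_pushout C k t1 al be" using po_ex[OF cy(2)] by blast
  define M where "M = tgt C al"
  have ab: "al \<in> hom C I M" "be \<in> hom C T M" using po_homs[OF ct P2] t cy unfolding M_def by (auto simp: hom_def)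
  have bec: "be \<in> cof C" using po_cof[OF cy(2) P2] .
  have P3: "is_pushout C eU (cmp C f eU) (cmp C t1 j2) t2" using po_paste[OF ct po_sym[OF ct P0] P1] .
  have feU: "cmp C f eU \<in> hom C z V" using c_cmp[OF ct eU f] .
  have t1j2c: "cmp C t1 j2 \<in> cof C" using po_cof[OF init_cof[OF z feU] po_sym[OF ct P3]] .
  have t1j2: "cmp C t1 j2 \<in> hom C U T" using c_cmp[OF ct j(2) t(1)] .
  define c where "c = cmp C be (cmp C t1 j2)"
  have c: "c \<in> hom C U M" "c \<in> cof C" unfolding c_def
    using c_cmp[OF ct t1j2 ab(2)] cof_comp[OF t1j2c bec] t1j2 ab by (auto simp: hom_def)
  have sk: "cmp C s k \<in> hom C S U" using c_cmp[OF ct cy(1) cy(3)] .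
  have fsk: "cmp C f (cmp C s k) \<in> hom C S V" using c_cmp[OF ct sk f] .
  have idV: "ident C V \<in> hom C V V" using c_id[OF ct Uo(2)] .
  have e1: "cmp C (cmp C f (cmp C s k)) j1 = cmp C (ident C V) f"
  proof -
    have "cmp C (cmp C f (cmp C s k)) j1 = cmp C f (cmp C (cmp C s k) j1)" using c_assoc[OF ct j(1) sk f] by simp
    also have "\<dots> = cmp C f (ident C U)" using c_assoc[OF ct j(1) cy(1) cy(3)] cy(5) by simp
    also have "\<dots> = f" using c_idr[OF ct f] .
    finally show ?thesis using c_idl[OF ct f] by simp
  qed
  obtain w where w: "w \<in> hom C T V" "cmp C w t1 = cmp C f (cmp C s k)" "cmp C w t2 = ident C V"
    using po_univ[OF ct P1 _ _ e1] fsk idV j f unfolding T_def by (auto simp: hom_def)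
  have fs: "cmp C f s \<in> hom C I V" using c_cmp[OF ct cy(3) f] .
  have e2: "cmp C (cmp C f s) k = cmp C w t1" using w(2) c_assoc[OF ct cy(1) cy(3) f] by simp
  obtain r where r: "r \<in> hom C M V" "cmp C r al = cmp C f s" "cmp C r be = w"
    using po_univ[OF ct P2 _ _ e2] fs w cy t unfolding M_def by (auto simp: hom_def)
  have rc: "cmp C r c = f"
  proof -
    have "cmp C r c = cmp C (cmp C r be) (cmp C t1 j2)" unfolding c_def using c_assoc[OF ct t1j2 ab(2) r(1)] .
    also have "\<dots> = cmp C (cmp C w t1) j2" using r(3) c_assoc[OF ct j(2) t(1) w(1)] by simp
    also have "\<dots> = cmp C f (cmp C (cmp C s k) j2)" using w(2) c_assoc[OF ct j(2) sk f] by simp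
    also have "\<dots> = cmp C f (ident C U)" using c_assoc[OF ct j(2) cy(1) cy(3)] cy(6) by simp
    also have "\<dots> = f" using c_idr[OF ct f] .
    finally show ?thesis .
  qed
  have P4: "is_pushout C (cmp C k j1) f al (cmp C be t2)"
    using po_sym[OF ct po_paste[OF ct po_sym[OF ct P1] po_sym[OF ct P2]]] .
  have kj1: "cmp C k j1 \<in> hom C U I" using c_cmp[OF ct j(1) cy(1)] .
  have kj1c: "cmp C k j1 \<in> cof C" using cof_comp[OF j1c cy(2)] j cy by (auto simp: hom_def)
  have kj1w: "cmp C k j1 \<in> we C" using we_left[OF kj1 cy(3) cy(4)] cy(5) id_we[OF Uo(1)] by simp
  have bt: "cmp C be t2 \<in> we C" using po_tcof[OF kj1c kj1w P4] by blast
  have bth: "cmp C be t2 \<in> hom C V M" using c_cmp[OF ct t(2) ab(2)] .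
  have "cmp C r (cmp C be t2) = ident C V" using c_assoc[OF ct t(2) ab(2) r(1)] r(3) w(3) by simp
  then have rw: "r \<in> we C" using we_right[OF bth r(1) bt] id_we[OF Uo(2)] by simp
  show ?thesis using c r rw rc by blast
qed

end



context cylc begin

lemma restrict: assumes Pa: "is_pushout C a x pp qq" and ac: "a \<in> cof C" and h: "htpy_rel C qq f g"
  shows "htpy_rel C a (cmp C f pp) (cmp C g pp)"
proof -
  note ct = cat
  define A where "A = src C a"
  define B where "B = tgt C a"
  define X where "X = tgt C x"
  define P where "P = tgt C pp"
  have hs: "a \<in> hom C A B" "x \<in> hom C A X" "pp \<in> hom C B P" "qq \<in> hom C X P"
    using po_homs[OF ct Pa] unfolding A_def B_def X_def P_def by (auto simp: hom_def)
  have Bo: "B \<in> ob C" using c_homob[OF ct hs(1)] by blast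
  from h have qc: "qq \<in> cof C" and far: "f \<in> ar C" "g \<in> ar C" and sf: "src C f = P" "src C g = P"
    and tfg: "tgt C f = tgt C g" and fq: "cmp C f qq = cmp C g qq"
    unfolding htpy_rel_def using hs by (auto simp: hom_def)
  define Y where "Y = tgt C f"
  have fg: "f \<in> hom C P Y" "g \<in> hom C P Y" using far sf tfg unfolding Y_def by (auto simp: hom_def)
  from h obtain j1 j2 I k s H where Pq: "is_pushout C qq qq j1 j2" and
     k: "k \<in> hom C (tgt C j1) I" "k \<in> cof C" and s: "s \<in> hom C I P" "s \<in> we C"
     and sk: "cmp C s (cmp C k j1) = ident C P" "cmp C s (cmp C k j2) = ident C P"
     and H: "H \<in> hom C I Y" "cmp C H (cmp C k j1) = f" "cmp C H (cmp C k j2) = g"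
    unfolding htpy_rel_def Y_def using hs by (auto simp: hom_def)
  define Qb where "Qb = tgt C j1"
  have jj: "j1 \<in> hom C P Qb" "j2 \<in> hom C P Qb" using po_homs[OF ct Pq] hs unfolding Qb_def by (auto simp: hom_def)
  have k': "k \<in> hom C Qb I" using k(1) unfolding Qb_def .
  have "a \<in> ar C" using hs by (simp add: hom_def)
  then obtain j1' j2' where P5: "is_pushout C a a j1' j2'" using po_ex[OF ac] by blast
  define Q where "Q = tgt C j1'"
  have jj': "j1' \<in> hom C B Q" "j2' \<in> hom C B Q" using po_homs[OF ct P5] hs unfolding Q_def B_def by (auto simp: hom_def)
  have idB: "ident C B \<in> hom C B B" using c_id[OF ct Bo] .
  obtain nb where nb: "nb \<in> hom C Q B" "cmp C nb j1' = ident C B" "cmp C nb j2' = ident C B"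
    using po_univ[OF ct P5, of "ident C B" B "ident C B"] idB unfolding Q_def B_def by auto
  obtain J kk ss where fa: "kk \<in> hom C Q J" "kk \<in> cof C" "ss \<in> hom C J B" "ss \<in> we C" "cmp C ss kk = nb"
    using factor[OF nb(1)] by blast
  have ssk: "cmp C ss (cmp C kk j1') = ident C B" "cmp C ss (cmp C kk j2') = ident C B"
    using c_assoc[OF ct jj'(1) fa(1) fa(3)] c_assoc[OF ct jj'(2) fa(1) fa(3)] fa(5) nb by simp_all
  have jp: "cmp C j1 pp \<in> hom C B Qb" "cmp C j2 pp \<in> hom C B Qb" using c_cmp[OF ct hs(3)] jj by auto
  have kjp: "cmp C k (cmp C j1 pp) \<in> hom C B I" "cmp C k (cmp C j2 pp) \<in> hom C B I"
    using c_cmp[OF ct _ k'] jp by auto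
  have jq: "cmp C j1 qq = cmp C j2 qq" using po_comm[OF ct Pq] .
  have pa: "cmp C pp a = cmp C qq x" using po_comm[OF ct Pa] .
  have eg: "cmp C (cmp C k (cmp C j1 pp)) a = cmp C (cmp C k (cmp C j2 pp)) a"
  proof -
    have "cmp C (cmp C k (cmp C j1 pp)) a = cmp C k (cmp C (cmp C j1 pp) a)"
      using c_assoc[OF ct hs(1) jp(1) k'] by simp
    also have "\<dots> = cmp C k (cmp C j1 (cmp C qq x))" using c_assoc[OF ct hs(1) hs(3) jj(1)] pa by simp
    also have "\<dots> = cmp C k (cmp C j2 (cmp C qq x))" using c_assoc[OF ct hs(2) hs(4) jj(1)] c_assoc[OF ct hs(2) hs(4) jj(2)] jq by simp
    also have "\<dots> = cmp C k (cmp C (cmp C j2 pp) a)" using c_assoc[OF ct hs(1) hs(3) jj(2)] pa by simp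
    also have "\<dots> = cmp C (cmp C k (cmp C j2 pp)) a" using c_assoc[OF ct hs(1) jp(2) k'] by simp
    finally show ?thesis .
  qed
  obtain ga where ga: "ga \<in> hom C Q I" "cmp C ga j1' = cmp C k (cmp C j1 pp)" "cmp C ga j2' = cmp C k (cmp C j2 pp)"
    using po_univ[OF ct P5 _ _ eg] kjp unfolding Q_def B_def by (auto simp: hom_def)
  have "ga \<in> ar C" "src C ga = src C kk" using ga fa by (auto simp: hom_def)
  then obtain al be where P6: "is_pushout C kk ga al be" using po_ex[OF fa(2)] by blast
  define U where "U = tgt C al"
  have ab: "al \<in> hom C J U" "be \<in> hom C I U" using po_homs[OF ct P6] fa ga unfolding U_def by (auto simp: hom_def)
  have bec: "be \<in> cof C" using po_cof[OF fa(2) P6] .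
  have ps: "cmp C pp ss \<in> hom C J P" using c_cmp[OF ct fa(3) hs(3)] .
  have pssk: "cmp C (cmp C pp ss) kk \<in> hom C Q P" using c_cmp[OF ct fa(1) ps] .
  have sga: "cmp C s ga \<in> hom C Q P" using c_cmp[OF ct ga(1) s(1)] .
  have skjp: "cmp C s (cmp C k (cmp C j1 pp)) = pp" "cmp C s (cmp C k (cmp C j2 pp)) = pp"
  proof -
    have "cmp C s (cmp C k (cmp C j1 pp)) = cmp C (cmp C s (cmp C k j1)) pp"
      using c_assoc[OF ct hs(3) jj(1) k'] c_assoc[OF ct hs(3) c_cmp[OF ct jj(1) k'] s(1)] by simp
    then show "cmp C s (cmp C k (cmp C j1 pp)) = pp" using sk c_idl[OF ct hs(3)] by simp
    have "cmp C s (cmp C k (cmp C j2 pp)) = cmp C (cmp C s (cmp C k j2)) pp"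
      using c_assoc[OF ct hs(3) jj(2) k'] c_assoc[OF ct hs(3) c_cmp[OF ct jj(2) k'] s(1)] by simp
    then show "cmp C s (cmp C k (cmp C j2 pp)) = pp" using sk c_idl[OF ct hs(3)] by simp
  qed
  have kj: "cmp C kk j1' \<in> hom C B J" "cmp C kk j2' \<in> hom C B J" using c_cmp[OF ct _ fa(1)] jj' by auto
  have pssk1: "cmp C (cmp C (cmp C pp ss) kk) j1' = pp" "cmp C (cmp C (cmp C pp ss) kk) j2' = pp"
  proof -
    have "cmp C (cmp C (cmp C pp ss) kk) j1' = cmp C pp (cmp C ss (cmp C kk j1'))"
      using c_assoc[OF ct jj'(1) fa(1) ps] c_assoc[OF ct kj(1) fa(3) hs(3)] by simp
    then show "cmp C (cmp C (cmp C pp ss) kk) j1' = pp" using ssk c_idr[OF ct hs(3)] by simp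
    have "cmp C (cmp C (cmp C pp ss) kk) j2' = cmp C pp (cmp C ss (cmp C kk j2'))"
      using c_assoc[OF ct jj'(2) fa(1) ps] c_assoc[OF ct kj(2) fa(3) hs(3)] by simp
    then show "cmp C (cmp C (cmp C pp ss) kk) j2' = pp" using ssk c_idr[OF ct hs(3)] by simp
  qed
  have e6: "cmp C (cmp C pp ss) kk = cmp C s ga"
    apply (rule po_uniq[OF ct P5, of _ P])
    using pssk sga pssk1 c_assoc[OF ct jj'(1) ga(1) s(1)] c_assoc[OF ct jj'(2) ga(1) s(1)] ga skjp
    unfolding Q_def by auto
  obtain rho where rho: "rho \<in> hom C U P" "cmp C rho al = cmp C pp ss" "cmp C rho be = s"
    using po_univ[OF ct P6 _ _ e6] ps s fa ga unfolding U_def by (auto simp: hom_def)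
  obtain W c om where fc: "c \<in> hom C U W" "c \<in> cof C" "om \<in> hom C W P" "om \<in> we C" "cmp C om c = rho"
    using factor[OF rho(1)] by blast
  have cb: "cmp C c be \<in> hom C I W" using c_cmp[OF ct ab(2) fc(1)] .
  have cbc: "cmp C c be \<in> cof C" using cof_comp[OF bec fc(2)] ab fc by (auto simp: hom_def)
  have "cmp C om (cmp C c be) = s" using c_assoc[OF ct ab(2) fc(1) fc(3)] fc(5) rho(3) by simp
  then have cbw: "cmp C c be \<in> we C" using we_left[OF cb fc(3) fc(4)] s(2) by simp
  obtain HW where HW: "HW \<in> hom C W Y" "cmp C HW (cmp C c be) = H" using extend[OF cb cbc cbw H(1)] by blast
  define H' where "H' = cmp C HW (cmp C c al)"
  have ca: "cmp C c al \<in> hom C J W" using c_cmp[OF ct ab(1) fc(1)] .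
  have H'h: "H' \<in> hom C J Y" unfolding H'_def using c_cmp[OF ct ca HW(1)] .
  have akk: "cmp C al kk = cmp C be ga" using po_comm[OF ct P6] .
  have H'k: "cmp C H' kk = cmp C H ga"
  proof -
    have "cmp C H' kk = cmp C HW (cmp C c (cmp C al kk))"
      unfolding H'_def using c_assoc[OF ct fa(1) ca HW(1)] c_assoc[OF ct fa(1) ab(1) fc(1)] by simp
    also have "\<dots> = cmp C HW (cmp C (cmp C c be) ga)" using akk c_assoc[OF ct ga(1) ab(2) fc(1)] by simp
    also have "\<dots> = cmp C H ga" using c_assoc[OF ct ga(1) cb HW(1)] HW(2) by simp
    finally show ?thesis .
  qed
  have end1: "cmp C H' (cmp C kk j1') = cmp C f pp"
  proof -
    have "cmp C H' (cmp C kk j1') = cmp C (cmp C H ga) j1'" using c_assoc[OF ct jj'(1) fa(1) H'h] H'k by simp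
    also have "\<dots> = cmp C H (cmp C k (cmp C j1 pp))" using c_assoc[OF ct jj'(1) ga(1) H(1)] ga(2) by simp
    also have "\<dots> = cmp C (cmp C H (cmp C k j1)) pp"
      using c_assoc[OF ct hs(3) jj(1) k'] c_assoc[OF ct hs(3) c_cmp[OF ct jj(1) k'] H(1)] by simp
    finally show ?thesis using H(2) by simp
  qed
  have end2: "cmp C H' (cmp C kk j2') = cmp C g pp"
  proof -
    have "cmp C H' (cmp C kk j2') = cmp C (cmp C H ga) j2'" using c_assoc[OF ct jj'(2) fa(1) H'h] H'k by simp
    also have "\<dots> = cmp C H (cmp C k (cmp C j2 pp))" using c_assoc[OF ct jj'(2) ga(1) H(1)] ga(3) by simp
    also have "\<dots> = cmp C (cmp C H (cmp C k j2)) pp"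
      using c_assoc[OF ct hs(3) jj(2) k'] c_assoc[OF ct hs(3) c_cmp[OF ct jj(2) k'] H(1)] by simp
    finally show ?thesis using H(3) by simp
  qed
  have fp: "cmp C f pp \<in> hom C B Y" "cmp C g pp \<in> hom C B Y" using c_cmp[OF ct hs(3)] fg by auto
  have fpa: "cmp C (cmp C f pp) a = cmp C (cmp C g pp) a"
    using c_assoc[OF ct hs(1) hs(3) fg(1)] c_assoc[OF ct hs(1) hs(3) fg(2)] pa
      c_assoc[OF ct hs(2) hs(4) fg(1)] c_assoc[OF ct hs(2) hs(4) fg(2)] fq by simp
  show ?thesis unfolding htpy_rel_def
    apply (intro conjI)
    using ac fp fpa hs apply (simp_all add: hom_def)[7]
    apply (rule exI[of _ j1'], rule exI[of _ j2'], rule exI[of _ J], rule exI[of _ kk], rule exI[of _ ss], rule exI[of _ H'])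
    using P5 fa ssk H'h end1 end2 fp jj' unfolding Q_def B_def by (auto simp: hom_def)
qed

end



theorem mainTheorem1:
  fixes C :: "('o, 'a, 'm) cyl_scheme" and D :: "('p, 'b, 'n) cyl_scheme"
    and Fo :: "'o \<Rightarrow> 'p" and Fa :: "'a \<Rightarrow> 'b"
  assumes "cyl_morphism C D Fo Fa"
  shows "homotopy_fully_faithful C D Fo Fa \<longleftrightarrow>
    (\<forall>i A B r. i \<in> hom C A B \<and> i \<in> cof C \<and>
       r \<in> hom D (Fo B) (Fo A) \<and> cmp D r (Fa i) = ident D (Fo A) \<longrightarrow>
       (\<exists>r'. r' \<in> hom C B A \<and> cmp C r' i = ident C A \<and> htpy_rel D (Fa i) (Fa r') r))"
proof -
  have ccC: "cylinder_category C" and ccD: "cylinder_category D"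
    using assms unfolding cyl_morphism_def by auto
  interpret CC: cylc C by (rule cylc.intro[OF ccC])
  interpret DD: cylc D by (rule cylc.intro[OF ccD])
  note cC = CC.cat and cD = DD.cat
  have Fh: "\<And>f X Y. f \<in> hom C X Y \<Longrightarrow> Fa f \<in> hom D (Fo X) (Fo Y)"
    using assms unfolding cyl_morphism_def by (auto simp: hom_def)
  have Fid: "\<And>X. X \<in> ob C \<Longrightarrow> Fa (ident C X) = ident D (Fo X)"
    using assms unfolding cyl_morphism_def by auto
  have Fcmp: "\<And>f g X Y Z. f \<in> hom C X Y \<Longrightarrow> g \<in> hom C Y Z \<Longrightarrow> Fa (cmp C g f) = cmp D (Fa g) (Fa f)"
    using assms unfolding cyl_morphism_def by (auto simp: hom_def)
  have Fcof: "\<And>f. f \<in> cof C \<Longrightarrow> Fa f \<in> cof D"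
    using assms unfolding cyl_morphism_def by auto
  have Fpo: "\<And>i f p q. i \<in> cof C \<Longrightarrow> is_pushout C i f p q \<Longrightarrow> is_pushout D (Fa i) (Fa f) (Fa p) (Fa q)"
    using assms unfolding cyl_morphism_def by blast
  show ?thesis
  proof
    assume hff: "homotopy_fully_faithful C D Fo Fa"
    show "\<forall>i A B r. i \<in> hom C A B \<and> i \<in> cof C \<and>
       r \<in> hom D (Fo B) (Fo A) \<and> cmp D r (Fa i) = ident D (Fo A) \<longrightarrow>
       (\<exists>r'. r' \<in> hom C B A \<and> cmp C r' i = ident C A \<and> htpy_rel D (Fa i) (Fa r') r)"
    proof (intro allI impI)
      fix i A B r assume a: "i \<in> hom C A B \<and> i \<in> cof C \<and>
       r \<in> hom D (Fo B) (Fo A) \<and> cmp D r (Fa i) = ident D (Fo A)"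
      have Ao: "A \<in> ob C" using c_homob[OF cC] a by blast
      have idA: "ident C A \<in> hom C A A" using c_id[OF cC Ao] .
      have "cmp D r (Fa i) = Fa (ident C A)" using a Fid[OF Ao] by simp
      then show "\<exists>r'. r' \<in> hom C B A \<and> cmp C r' i = ident C A \<and> htpy_rel D (Fa i) (Fa r') r"
        using hff a idA unfolding homotopy_fully_faithful_def by blast
    qed
  next
    assume R: "\<forall>i A B r. i \<in> hom C A B \<and> i \<in> cof C \<and>
       r \<in> hom D (Fo B) (Fo A) \<and> cmp D r (Fa i) = ident D (Fo A) \<longrightarrow>
       (\<exists>r'. r' \<in> hom C B A \<and> cmp C r' i = ident C A \<and> htpy_rel D (Fa i) (Fa r') r)"
    show "homotopy_fully_faithful C D Fo Fa" unfolding homotopy_fully_faithful_def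
    proof (intro allI impI)
      fix i A B x X v assume a: "i \<in> hom C A B \<and> i \<in> cof C \<and> x \<in> hom C A X \<and>
        v \<in> hom D (Fo B) (Fo X) \<and> cmp D v (Fa i) = Fa x"
      have i: "i \<in> hom C A B" "i \<in> cof C" and x: "x \<in> hom C A X" and v: "v \<in> hom D (Fo B) (Fo X)"
        and vi: "cmp D v (Fa i) = Fa x" using a by auto
      have Xo: "X \<in> ob C" using c_homob[OF cC x] by blast
      have "x \<in> ar C" "src C x = src C i" using i x by (auto simp: hom_def)
      then obtain p q where Pc: "is_pushout C i x p q" using CC.po_ex[OF i(2)] by blast
      define P where "P = tgt C p"
      have pq: "p \<in> hom C B P" "q \<in> hom C X P" using po_homs[OF cC Pc] i x unfolding P_def by (auto simp: hom_def)
      have qc: "q \<in> cof C" using CC.po_cof[OF i(2) Pc] .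
      have Pd: "is_pushout D (Fa i) (Fa x) (Fa p) (Fa q)" using Fpo[OF i(2) Pc] .
      have Fi: "Fa i \<in> hom D (Fo A) (Fo B)" and Fx: "Fa x \<in> hom D (Fo A) (Fo X)"
        and Fp: "Fa p \<in> hom D (Fo B) (Fo P)" and Fq: "Fa q \<in> hom D (Fo X) (Fo P)"
        using Fh i x pq by auto
      have FXo: "Fo X \<in> ob D" using c_homob[OF cD Fx] by blast
      have idX: "ident D (Fo X) \<in> hom D (Fo X) (Fo X)" using c_id[OF cD FXo] .
      have e: "cmp D v (Fa i) = cmp D (ident D (Fo X)) (Fa x)" using vi c_idl[OF cD Fx] by simp
      obtain r where r: "r \<in> hom D (Fo P) (Fo X)" "cmp D r (Fa p) = v" "cmp D r (Fa q) = ident D (Fo X)"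
        using po_univ[OF cD Pd _ _ e] v idX Fi Fx Fp by (auto simp: hom_def)
      obtain r' where r': "r' \<in> hom C P X" "cmp C r' q = ident C X" "htpy_rel D (Fa q) (Fa r') r"
        using R pq(2) qc r(1) r(3) by blast
      define v' where "v' = cmp C r' p"
      have v'h: "v' \<in> hom C B X" unfolding v'_def using c_cmp[OF cC pq(1) r'(1)] .
      have "cmp C v' i = cmp C r' (cmp C p i)" unfolding v'_def using c_assoc[OF cC i(1) pq(1) r'(1)] by simp
      also have "\<dots> = cmp C (cmp C r' q) x" using po_comm[OF cC Pc] c_assoc[OF cC x pq(2) r'(1)] by simp
      also have "\<dots> = x" using r'(2) c_idl[OF cC x] by simp
      finally have v'i: "cmp C v' i = x" .
      have "htpy_rel D (Fa i) (cmp D (Fa r') (Fa p)) (cmp D r (Fa p))"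
        using DD.restrict[OF Pd Fcof[OF i(2)] r'(3)] .
      moreover have "Fa v' = cmp D (Fa r') (Fa p)" unfolding v'_def using Fcmp[OF pq(1) r'(1)] .
      ultimately have "htpy_rel D (Fa i) (Fa v') v" using r(2) by simp
      then show "\<exists>v'. v' \<in> hom C B X \<and> cmp C v' i = x \<and> htpy_rel D (Fa i) (Fa v') v"
        using v'h v'i by blast
    qed
  qed
qed


end
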